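(* Let $\mathcal F=(F,\rightarrowtail)$ be a finite argumentation framework, let $A\subseteq F$ be weakly admissible, and let $X\subseteq F$ be a set each of whose elements is defended by $A$ (every attacker of each $x\in X$ is attacked by some element of $A$). Then $A\cup X$ is weakly admissible.
   Context: An argumentation framework $\mathcal F=(F,\rightarrowtail)$ consists of a finite set $F$ of arguments and an attack relation $\rightarrowtail\subseteq F\times F$. An argument $y$ attacks a set $A$ if $y\rightarrowtail a$ for some $a\in A$; $A^+=\{x\in F:\exists a\in A,\ a\rightarrowtail x\}$. A set is conflict-free if none of its elements attacks one of its elements. For $A\subseteq F$, the $A$-reduct $\mathcal F^A$ is the restriction of $\mathcal F$ (arguments and attacks) to $F\setminus(A\cup A^+)$. Weak admissibility (defined recursively on the size of the framework): $A\subseteq F$ is weakly admissible in $\mathcal F$ if $A$ is conflict-free and for every $y\in F$ attacking $A$, $y$ belongs to no weakly admissible set of $\mathcal F^A$. *)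

theory Defs
  imports Main
begin

text \<open>An argumentation framework is given by a finite set F of arguments and an
attack relation R; only attacks between elements of F are relevant (the attack
relation of the framework is R restricted to F x F).\<close>

definition conflict_free :: "('a \<Rightarrow> 'a \<Rightarrow> bool) \<Rightarrow> 'a set \<Rightarrow> bool" where
  "conflict_free R A \<longleftrightarrow> (\<forall>a\<in>A. \<forall>b\<in>A. \<not> R a b)"

definition attacks_set :: "('a \<Rightarrow> 'a \<Rightarrow> bool) \<Rightarrow> 'a \<Rightarrow> 'a set \<Rightarrow> bool" where
  "attacks_set R y A \<longleftrightarrow> (\<exists>a\<in>A. R y a)"

definition plus :: "'a set \<Rightarrow> ('a \<Rightarrow> 'a \<Rightarrow> bool) \<Rightarrow> 'a set \<Rightarrow> 'a set" where
  "plus F R A = {x\<in>F. \<exists>a\<in>A. R a x}"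

text \<open>Argument set of the A-reduct (attacks are the restriction of R to it).\<close>
definition reduct :: "'a set \<Rightarrow> ('a \<Rightarrow> 'a \<Rightarrow> bool) \<Rightarrow> 'a set \<Rightarrow> 'a set" where
  "reduct F R A = F - (A \<union> plus F R A)"

lemma reduct_card_less:
  assumes "finite F" "A \<subseteq> F" "a \<in> A"
  shows "card (reduct F R A) < card F"
proof -
  have "reduct F R A \<subset> F" using assms unfolding reduct_def by blast
  thus ?thesis using assms(1) by (simp add: psubset_card_mono)
qed

function weakly_admissible :: "'a set \<Rightarrow> ('a \<Rightarrow> 'a \<Rightarrow> bool) \<Rightarrow> 'a set \<Rightarrow> bool" where
  "weakly_admissible F R A \<longleftrightarrow>
     (if finite F \<and> A \<subseteq> F then
        conflict_free R A \<and>
        (\<forall>y\<in>F. \<forall>a\<in>A. R y a \<longrightarrow>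
           (\<forall>B. \<not> (weakly_admissible (reduct F R A) R B \<and> y \<in> B)))
      else False)"
  by pat_completeness auto
termination
  by (relation "measure (\<lambda>(F, R, A). card F)") (auto intro: reduct_card_less)

definition defends :: "'a set \<Rightarrow> ('a \<Rightarrow> 'a \<Rightarrow> bool) \<Rightarrow> 'a set \<Rightarrow> 'a \<Rightarrow> bool" where
  "defends F R A x \<longleftrightarrow> (\<forall>y\<in>F. R y x \<longrightarrow> (\<exists>a\<in>A. R a y))"

end

theory Submission
  imports Defs
begin

declare weakly_admissible.simps[simp del]

lemma wa_iff:
  "weakly_admissible G R B \<longleftrightarrow> (finite G \<and> B \<subseteq> G \<and> conflict_free R B \<and>
     (\<forall>y\<in>G. \<forall>a\<in>B. R y a \<longrightarrow> (\<forall>C. \<not> (weakly_admissible (reduct G R B) R C \<and> y \<in> C))))"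
  by (subst weakly_admissible.simps) auto

lemma reduct_reduct: "reduct (reduct F R A) R B = reduct F R (A \<union> B)"
  unfolding reduct_def plus_def by blast

lemma reduct_sub: "reduct F R A \<subseteq> F"
  unfolding reduct_def by blast

lemma L:
  assumes "finite G" "S \<subseteq> G" "conflict_free R S" "\<forall>s\<in>S. \<forall>z\<in>G. \<not> R z s"
    "weakly_admissible (reduct G R S) R B"
  shows "weakly_admissible G R (B \<union> S)"
proof -
  have B: "B \<subseteq> reduct G R S" "conflict_free R B"
    "\<forall>y\<in>reduct G R S. \<forall>a\<in>B. R y a \<longrightarrow> (\<forall>C. \<not> (weakly_admissible (reduct (reduct G R S) R B) R C \<and> y \<in> C))"
    using wa_iff[THEN iffD1, OF assms(5)] by blast+
  have BG: "B \<subseteq> G" using subset_trans[OF B(1) reduct_sub] .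
  have cf: "conflict_free R (B \<union> S)"
    using B(1,2) assms(3,4) BG unfolding conflict_free_def reduct_def plus_def by blast
  have att: "\<forall>y\<in>G. \<forall>a\<in>B \<union> S. R y a \<longrightarrow> (\<forall>C. \<not> (weakly_admissible (reduct G R (B \<union> S)) R C \<and> y \<in> C))"
  proof (intro ballI impI allI notI)
    fix y a C
    assume y: "y \<in> G" and a: "a \<in> B \<union> S" and r: "R y a"
      and c: "weakly_admissible (reduct G R (B \<union> S)) R C \<and> y \<in> C"
    have aB: "a \<in> B" using a r y assms(4) by blast
    have "C \<subseteq> reduct G R (B \<union> S)" using c wa_iff[of "reduct G R (B \<union> S)" R C] by blast
    hence yr: "y \<in> reduct G R S" using c unfolding reduct_def plus_def by blast
    have "reduct G R (B \<union> S) = reduct (reduct G R S) R B"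
      by (simp add: reduct_reduct Un_commute)
    thus False using B(3) yr aB r c by metis
  qed
  show ?thesis unfolding wa_iff[of G R "B \<union> S"]
    using assms(1,2) BG cf att by blast
qed

theorem mainTheorem15:
  fixes F :: "'a set" and R :: "'a \<Rightarrow> 'a \<Rightarrow> bool" and A X :: "'a set"
  assumes "finite F"
    and "weakly_admissible F R A"
    and "X \<subseteq> F"
    and "\<forall>x\<in>X. defends F R A x"
  shows "weakly_admissible F R (A \<union> X)"
proof -
  define F' where "F' = reduct F R A"
  define X' where "X' = X - A"
  have A: "A \<subseteq> F" "conflict_free R A"
    "\<forall>y\<in>F. \<forall>a\<in>A. R y a \<longrightarrow> (\<forall>C. \<not> (weakly_admissible F' R C \<and> y \<in> C))"
    using wa_iff[THEN iffD1, OF assms(2)] unfolding F'_def by blast+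
  have fF': "finite F'" unfolding F'_def using finite_subset[OF reduct_sub assms(1)] .
  have a: "\<forall>x\<in>X. \<forall>a\<in>A. \<not> R a x"
    using assms(3,4) A(1,2) unfolding defends_def conflict_free_def by blast
  have unatt: "\<forall>x\<in>X'. \<forall>z\<in>F'. \<not> R z x"
    using assms(3,4) unfolding defends_def X'_def F'_def reduct_def plus_def by blast
  have X'F': "X' \<subseteq> F'"
    using assms(3) a unfolding X'_def F'_def reduct_def plus_def by blast
  have b: "\<forall>x\<in>X'. \<forall>a\<in>A. \<not> R x a"
  proof (intro ballI notI)
    fix x a assume x: "x \<in> X'" and aA: "a \<in> A" and r: "R x a"
    have e: "weakly_admissible (reduct F' R {x}) R {}"
      using finite_subset[OF reduct_sub fF']
      by (subst wa_iff) (auto simp: conflict_free_def)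
    have "weakly_admissible F' R ({} \<union> {x})"
      apply (rule L[OF fF' _ _ _ e])
      using x X'F' unatt by (auto simp: conflict_free_def)
    thus False using A(3) x aA r assms(3) unfolding X'_def by auto
  qed
  have cf: "conflict_free R (A \<union> X)"
    unfolding conflict_free_def
  proof (intro ballI notI)
    fix u v assume u: "u \<in> A \<union> X" and v: "v \<in> A \<union> X" and r: "R u v"
    show False
    proof (cases "v \<in> A")
      case True
      then show ?thesis using u r A(2) b unfolding conflict_free_def X'_def by blast
    next
      case False
      hence v': "v \<in> X'" using v X'_def by blast
      show ?thesis
      proof (cases "u \<in> A")
        case True then show ?thesis using a v' r X'_def by blast
      next
        case False
        hence "u \<in> F'" using u X'F' X'_def by blast
        then show ?thesis using unatt v' r by blast
      qed
    qed
  qed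
  have att: "\<forall>y\<in>F. \<forall>c\<in>A \<union> X. R y c \<longrightarrow> (\<forall>C. \<not> (weakly_admissible (reduct F R (A \<union> X)) R C \<and> y \<in> C))"
  proof (intro ballI impI allI notI)
    fix y c C
    assume y: "y \<in> F" and c: "c \<in> A \<union> X" and r: "R y c"
      and C: "weakly_admissible (reduct F R (A \<union> X)) R C \<and> y \<in> C"
    have "C \<subseteq> reduct F R (A \<union> X)" using C wa_iff[of "reduct F R (A \<union> X)" R C] by blast
    hence yr: "y \<in> reduct F R (A \<union> X)" using C by blast
    show False
    proof (cases "c \<in> A")
      case False
      hence "c \<in> X" using c by blast
      then obtain a where "a \<in> A" "R a y" using assms(4) y r unfolding defends_def by blast
      thus False using yr y unfolding reduct_def plus_def by blast
    next
      case True
      have eq: "reduct F R (A \<union> X) = reduct F' R X'"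
        unfolding F'_def X'_def reduct_reduct by (metis Un_Diff_cancel)
      have "weakly_admissible F' R (C \<union> X')"
        apply (rule L[OF fF' X'F' _ unatt])
        using cf C eq unfolding conflict_free_def X'_def by auto
      thus False using A(3) y True r C by blast
    qed
  qed
  show ?thesis unfolding wa_iff[of F R "A \<union> X"]
    using assms(1,3) A(1) cf att by blast
qed

end
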